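(* Let $f=(f_1,f_2):\mathbb{R}^2\to\mathbb{R}^2$ be a smooth one-generic mapping having a cusp point at the origin with $f(\mathbf{0})=\mathbf{0}$, and suppose that $\frac{\partial f_1}{\partial x}(\mathbf{0})=\frac{\partial f_2}{\partial x}(\mathbf{0})=\frac{\partial f_2}{\partial y}(\mathbf{0})=0$, $\frac{\partial f_1}{\partial y}(\mathbf{0})\ne0$, $\frac{\partial J}{\partial x}(\mathbf{0})=0$, $\frac{\partial J}{\partial y}(\mathbf{0})\ne0$. Let $\varphi:(\mathbb{R},0)\to(\mathbb{R},0)$ be the smooth germ with $J(t,\varphi(t))\equiv0$, and set $$v_1=\frac{d^2}{dt^2}\begin{bmatrix}f_1(t,\varphi(t))\\ f_2(t,\varphi(t))\end{bmatrix}\Big|_{t=0},\qquad v_2=Df(\mathbf{0})\cdot\begin{bmatrix}\frac{\partial J}{\partial x}(\mathbf{0})\\ \frac{\partial J}{\partial y}(\mathbf{0})\end{bmatrix}.$$ Then (i) $\det DF(\mathbf{0})\ne0$; (ii) the (nonzero) vectors $v_1$ and $v_2$ point in the same direction if and only if $\det DF(\mathbf{0})<0$, and in opposite directions if and only if $\det DF(\mathbf{0})>0$.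
   Context: $J=\det Df$ and $F=Df\cdot(-\partial J/\partial y,\ \partial J/\partial x)^T$. $f$ is one-generic if $dJ\ne0$ on $J^{-1}(0)$ (equivalently, $j^1f$ is transverse to the corank strata). A point $p\in S_1(f)=J^{-1}(0)$ with $T_pS_1(f)=\ker Df(p)$ is a cusp point if it is a simple zero of $dJ(\xi)$ on $S_1(f)$, $\xi$ a nonvanishing vector field along $S_1(f)$ in $\ker Df$. *)

theory Defs
  imports "HOL-Analysis.Analysis"
begin

definition px :: "(real \<Rightarrow> real \<Rightarrow> real) \<Rightarrow> real \<Rightarrow> real \<Rightarrow> real" where
  "px g x y = deriv (\<lambda>s. g s y) x"

definition py :: "(real \<Rightarrow> real \<Rightarrow> real) \<Rightarrow> real \<Rightarrow> real \<Rightarrow> real" where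
  "py g x y = deriv (\<lambda>s. g x s) y"

coinductive smooth2 :: "(real \<Rightarrow> real \<Rightarrow> real) \<Rightarrow> bool" where
  "\<lbrakk>\<forall>x y. ((\<lambda>p. g (fst p) (snd p)) has_derivative
            (\<lambda>h. px g x y * fst h + py g x y * snd h)) (at (x, y));
    smooth2 (px g); smooth2 (py g)\<rbrakk> \<Longrightarrow> smooth2 g"

coinductive smooth1_on :: "real set \<Rightarrow> (real \<Rightarrow> real) \<Rightarrow> bool" where
  "\<lbrakk>\<forall>t\<in>S. (g has_real_derivative deriv g t) (at t);
    smooth1_on S (deriv g)\<rbrakk> \<Longrightarrow> smooth1_on S g"

definition jac :: "(real \<Rightarrow> real \<Rightarrow> real) \<Rightarrow> (real \<Rightarrow> real \<Rightarrow> real) \<Rightarrow> real \<Rightarrow> real \<Rightarrow> real" where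
  "jac f1 f2 x y = px f1 x y * py f2 x y - py f1 x y * px f2 x y"

text \<open>F = Df . (-dJ/dy, dJ/dx)^T, componentwise.\<close>

definition bigF1 :: "(real \<Rightarrow> real \<Rightarrow> real) \<Rightarrow> (real \<Rightarrow> real \<Rightarrow> real) \<Rightarrow> real \<Rightarrow> real \<Rightarrow> real" where
  "bigF1 f1 f2 x y = px f1 x y * (- py (jac f1 f2) x y) + py f1 x y * px (jac f1 f2) x y"

definition bigF2 :: "(real \<Rightarrow> real \<Rightarrow> real) \<Rightarrow> (real \<Rightarrow> real \<Rightarrow> real) \<Rightarrow> real \<Rightarrow> real \<Rightarrow> real" where
  "bigF2 f1 f2 x y = px f2 x y * (- py (jac f1 f2) x y) + py f2 x y * px (jac f1 f2) x y"

definition detDF :: "(real \<Rightarrow> real \<Rightarrow> real) \<Rightarrow> (real \<Rightarrow> real \<Rightarrow> real) \<Rightarrow> real \<Rightarrow> real \<Rightarrow> real" where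
  "detDF f1 f2 x y = px (bigF1 f1 f2) x y * py (bigF2 f1 f2) x y
                   - py (bigF1 f1 f2) x y * px (bigF2 f1 f2) x y"

definition one_generic :: "(real \<Rightarrow> real \<Rightarrow> real) \<Rightarrow> (real \<Rightarrow> real \<Rightarrow> real) \<Rightarrow> bool" where
  "one_generic f1 f2 \<longleftrightarrow>
     (\<forall>x y. jac f1 f2 x y = 0 \<longrightarrow> (px (jac f1 f2) x y, py (jac f1 f2) x y) \<noteq> (0, 0))"

text \<open>Cusp point (a, b): (a,b) lies on S_1(f) = J^{-1}(0); near (a,b) the curve S_1(f) is
parametrised by a smooth regular curve gamma = (g1, g2) with gamma(0) = (a, b); the tangent
T_p S_1(f) (spanned by gamma'(0)) lies in ker Df(p); and for a smooth nonvanishing field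
xi = (k1, k2) along S_1(f) with xi in ker Df, the function dJ(xi) restricted to S_1(f)
(i.e. along gamma) has a simple zero at (a, b).\<close>

definition cusp_point :: "(real \<Rightarrow> real \<Rightarrow> real) \<Rightarrow> (real \<Rightarrow> real \<Rightarrow> real) \<Rightarrow> real \<Rightarrow> real \<Rightarrow> bool" where
  "cusp_point f1 f2 a b \<longleftrightarrow>
     jac f1 f2 a b = 0 \<and>
     (\<exists>e>0. \<exists>g1 g2 k1 k2 :: real \<Rightarrow> real.
        smooth1_on (ball 0 e) g1 \<and> smooth1_on (ball 0 e) g2 \<and>
        smooth1_on (ball 0 e) k1 \<and> smooth1_on (ball 0 e) k2 \<and>
        g1 0 = a \<and> g2 0 = b \<and> (deriv g1 0, deriv g2 0) \<noteq> (0, 0) \<and>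
        (\<forall>t\<in>ball 0 e. jac f1 f2 (g1 t) (g2 t) = 0) \<and>
        px f1 a b * deriv g1 0 + py f1 a b * deriv g2 0 = 0 \<and>
        px f2 a b * deriv g1 0 + py f2 a b * deriv g2 0 = 0 \<and>
        (\<forall>t\<in>ball 0 e. (k1 t, k2 t) \<noteq> (0, 0) \<and>
           px f1 (g1 t) (g2 t) * k1 t + py f1 (g1 t) (g2 t) * k2 t = 0 \<and>
           px f2 (g1 t) (g2 t) * k1 t + py f2 (g1 t) (g2 t) * k2 t = 0) \<and>
        (let h = (\<lambda>t. px (jac f1 f2) (g1 t) (g2 t) * k1 t + py (jac f1 f2) (g1 t) (g2 t) * k2 t)
         in h 0 = 0 \<and> deriv h 0 \<noteq> 0))"

end

theory Submission
  imports Defs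
begin

definition Dfr :: "(real \<Rightarrow> real \<Rightarrow> real) \<Rightarrow> real \<Rightarrow> real \<Rightarrow> real \<Rightarrow> real \<Rightarrow> bool" where
 "Dfr g x y A B \<longleftrightarrow> ((\<lambda>p. g (fst p) (snd p)) has_derivative (\<lambda>h. A * fst h + B * snd h)) (at (x,y))"

lemma Dfr_partial:
  assumes "Dfr g x y A B"
  shows "((\<lambda>s. g s y) has_real_derivative A) (at x)" "((\<lambda>s. g x s) has_real_derivative B) (at y)"
proof -
  have d: "((\<lambda>s. (s, y)) has_derivative (\<lambda>h. (h, 0))) (at x)"
    by (auto intro!: derivative_eq_intros)
  have "(((\<lambda>p. g (fst p) (snd p)) \<circ> (\<lambda>s. (s, y))) has_derivative ((\<lambda>h. A * fst h + B * snd h) \<circ> (\<lambda>h. (h, 0)))) (at x)"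
    by (rule diff_chain_at[OF d]) (use assms in \<open>simp add: Dfr_def\<close>)
  then have "((\<lambda>s. g s y) has_derivative (\<lambda>h. A * h)) (at x)" by (simp add: o_def)
  then show "((\<lambda>s. g s y) has_real_derivative A) (at x)" unfolding has_field_derivative_def
    by (simp add: fun_eq_iff)
  have d: "((\<lambda>s. (x, s)) has_derivative (\<lambda>h. (0, h))) (at y)"
    by (auto intro!: derivative_eq_intros)
  have "(((\<lambda>p. g (fst p) (snd p)) \<circ> (\<lambda>s. (x, s))) has_derivative ((\<lambda>h. A * fst h + B * snd h) \<circ> (\<lambda>h. (0, h)))) (at y)"
    by (rule diff_chain_at[OF d]) (use assms in \<open>simp add: Dfr_def\<close>)
  then have "((\<lambda>s. g x s) has_derivative (\<lambda>h. B * h)) (at y)" by (simp add: o_def)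
  then show "((\<lambda>s. g x s) has_real_derivative B) (at y)" unfolding has_field_derivative_def
    by (simp add: fun_eq_iff)
qed

lemma Dfr_px: "Dfr g x y A B \<Longrightarrow> px g x y = A"
  unfolding px_def using Dfr_partial(1) DERIV_imp_deriv by blast

lemma Dfr_py: "Dfr g x y A B \<Longrightarrow> py g x y = B"
  unfolding py_def using Dfr_partial(2) DERIV_imp_deriv by blast

lemma Dfr_add: "Dfr g x y A B \<Longrightarrow> Dfr h x y C E \<Longrightarrow> Dfr (\<lambda>x y. g x y + h x y) x y (A+C) (B+E)"
  unfolding Dfr_def
  by (rule has_derivative_eq_rhs[OF has_derivative_add]) (auto simp: fun_eq_iff algebra_simps)

lemma Dfr_diff: "Dfr g x y A B \<Longrightarrow> Dfr h x y C E \<Longrightarrow> Dfr (\<lambda>x y. g x y - h x y) x y (A-C) (B-E)"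
  unfolding Dfr_def
  by (rule has_derivative_eq_rhs[OF has_derivative_diff]) (auto simp: fun_eq_iff algebra_simps)

lemma Dfr_neg: "Dfr g x y A B \<Longrightarrow> Dfr (\<lambda>x y. - g x y) x y (-A) (-B)"
  unfolding Dfr_def
  by (rule has_derivative_eq_rhs[OF has_derivative_minus]) (auto simp: fun_eq_iff algebra_simps)

lemma Dfr_mul: "Dfr g x y A B \<Longrightarrow> Dfr h x y C E \<Longrightarrow>
   Dfr (\<lambda>x y. g x y * h x y) x y (A * h x y + g x y * C) (B * h x y + g x y * E)"
  unfolding Dfr_def
  by (rule has_derivative_eq_rhs[OF has_derivative_mult]) (auto simp: fun_eq_iff algebra_simps)

inductive Pc :: "(real \<Rightarrow> real \<Rightarrow> real) \<Rightarrow> bool" where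
  base: "smooth2 g \<Longrightarrow> Pc g"
| add: "Pc g \<Longrightarrow> Pc h \<Longrightarrow> Pc (\<lambda>x y. g x y + h x y)"
| mul: "Pc g \<Longrightarrow> Pc h \<Longrightarrow> Pc (\<lambda>x y. g x y * h x y)"
| neg: "Pc g \<Longrightarrow> Pc (\<lambda>x y. - g x y)"
| diff: "Pc g \<Longrightarrow> Pc h \<Longrightarrow> Pc (\<lambda>x y. g x y - h x y)"

lemma smooth2_D: "smooth2 g \<Longrightarrow> Dfr g x y (px g x y) (py g x y) \<and> smooth2 (px g) \<and> smooth2 (py g)"
  by (erule smooth2.cases) (auto simp: Dfr_def)

lemma Pc_step: "Pc g \<Longrightarrow> (\<forall>x y. Dfr g x y (px g x y) (py g x y)) \<and> Pc (px g) \<and> Pc (py g)"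
proof (induction rule: Pc.induct)
  case (base g) thus ?case using smooth2_D by (auto intro: Pc.base)
next
  case (add g h)
  have D: "Dfr (\<lambda>x y. g x y + h x y) x y (px g x y + px h x y) (py g x y + py h x y)" for x y
    using add.IH by (auto intro: Dfr_add)
  have "px (\<lambda>x y. g x y + h x y) = (\<lambda>x y. px g x y + px h x y)"
       "py (\<lambda>x y. g x y + h x y) = (\<lambda>x y. py g x y + py h x y)"
    using Dfr_px[OF D] Dfr_py[OF D] by (auto simp: fun_eq_iff)
  then show ?case using D add.IH by (auto intro: Pc.add)
next
  case (diff g h)
  have D: "Dfr (\<lambda>x y. g x y - h x y) x y (px g x y - px h x y) (py g x y - py h x y)" for x y
    using diff.IH by (auto intro: Dfr_diff)
  have "px (\<lambda>x y. g x y - h x y) = (\<lambda>x y. px g x y - px h x y)"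
       "py (\<lambda>x y. g x y - h x y) = (\<lambda>x y. py g x y - py h x y)"
    using Dfr_px[OF D] Dfr_py[OF D] by (auto simp: fun_eq_iff)
  then show ?case using D diff.IH by (auto intro: Pc.diff)
next
  case (neg g)
  have D: "Dfr (\<lambda>x y. - g x y) x y (- px g x y) (- py g x y)" for x y
    using neg.IH by (auto intro: Dfr_neg)
  have "px (\<lambda>x y. - g x y) = (\<lambda>x y. - px g x y)"
       "py (\<lambda>x y. - g x y) = (\<lambda>x y. - py g x y)"
    using Dfr_px[OF D] Dfr_py[OF D] by (auto simp: fun_eq_iff)
  then show ?case using D neg.IH by (auto intro: Pc.neg)
next
  case (mul g h)
  have D: "Dfr (\<lambda>x y. g x y * h x y) x y (px g x y * h x y + g x y * px h x y)
              (py g x y * h x y + g x y * py h x y)" for x y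
    using mul.IH by (auto intro: Dfr_mul)
  have "px (\<lambda>x y. g x y * h x y) = (\<lambda>x y. px g x y * h x y + g x y * px h x y)"
       "py (\<lambda>x y. g x y * h x y) = (\<lambda>x y. py g x y * h x y + g x y * py h x y)"
    using Dfr_px[OF D] Dfr_py[OF D] by (auto simp: fun_eq_iff)
  moreover have "Pc (\<lambda>x y. px g x y * h x y + g x y * px h x y)"
    by (rule Pc.add; rule Pc.mul) (use mul.IH mul.hyps in auto)
  moreover have "Pc (\<lambda>x y. py g x y * h x y + g x y * py h x y)"
    by (rule Pc.add; rule Pc.mul) (use mul.IH mul.hyps in auto)
  ultimately show ?case using D by simp
qed

lemma Pc_smooth: "Pc g \<Longrightarrow> smooth2 g"
proof (coinduction arbitrary: g rule: smooth2.coinduct)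
  case (smooth2 g)
  then show ?case using Pc_step[OF smooth2] by (auto simp: Dfr_def)
qed

lemma s2_add: "smooth2 g \<Longrightarrow> smooth2 h \<Longrightarrow> smooth2 (\<lambda>x y. g x y + h x y)"
  by (rule Pc_smooth, rule Pc.add; rule Pc.base)
lemma s2_diff: "smooth2 g \<Longrightarrow> smooth2 h \<Longrightarrow> smooth2 (\<lambda>x y. g x y - h x y)"
  by (rule Pc_smooth, rule Pc.diff; rule Pc.base)
lemma s2_mul: "smooth2 g \<Longrightarrow> smooth2 h \<Longrightarrow> smooth2 (\<lambda>x y. g x y * h x y)"
  by (rule Pc_smooth, rule Pc.mul; rule Pc.base)
lemma s2_neg: "smooth2 g \<Longrightarrow> smooth2 (\<lambda>x y. - g x y)"
  by (rule Pc_smooth, rule Pc.neg; rule Pc.base)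
lemma s2_px: "smooth2 g \<Longrightarrow> smooth2 (px g)" using smooth2_D by blast
lemma s2_py: "smooth2 g \<Longrightarrow> smooth2 (py g)" using smooth2_D by blast
lemma s2_Dfr: "smooth2 g \<Longrightarrow> Dfr g x y (px g x y) (py g x y)" using smooth2_D by blast

lemma px_add: assumes "smooth2 g" "smooth2 h" shows "px (\<lambda>x y. g x y + h x y) x y = px g x y + px h x y"
  by (rule Dfr_px[OF Dfr_add[OF s2_Dfr[OF assms(1)] s2_Dfr[OF assms(2)]]])
lemma py_add: assumes "smooth2 g" "smooth2 h" shows "py (\<lambda>x y. g x y + h x y) x y = py g x y + py h x y"
  by (rule Dfr_py[OF Dfr_add[OF s2_Dfr[OF assms(1)] s2_Dfr[OF assms(2)]]])
lemma px_diff: assumes "smooth2 g" "smooth2 h" shows "px (\<lambda>x y. g x y - h x y) x y = px g x y - px h x y"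
  by (rule Dfr_px[OF Dfr_diff[OF s2_Dfr[OF assms(1)] s2_Dfr[OF assms(2)]]])
lemma py_diff: assumes "smooth2 g" "smooth2 h" shows "py (\<lambda>x y. g x y - h x y) x y = py g x y - py h x y"
  by (rule Dfr_py[OF Dfr_diff[OF s2_Dfr[OF assms(1)] s2_Dfr[OF assms(2)]]])
lemma px_neg: assumes "smooth2 g" shows "px (\<lambda>x y. - g x y) x y = - px g x y"
  by (rule Dfr_px[OF Dfr_neg[OF s2_Dfr[OF assms(1)]]])
lemma py_neg: assumes "smooth2 g" shows "py (\<lambda>x y. - g x y) x y = - py g x y"
  by (rule Dfr_py[OF Dfr_neg[OF s2_Dfr[OF assms(1)]]])
lemma px_mul: assumes "smooth2 g" "smooth2 h" shows "px (\<lambda>x y. g x y * h x y) x y = px g x y * h x y + g x y * px h x y"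
  by (rule Dfr_px[OF Dfr_mul[OF s2_Dfr[OF assms(1)] s2_Dfr[OF assms(2)]]])
lemma py_mul: assumes "smooth2 g" "smooth2 h" shows "py (\<lambda>x y. g x y * h x y) x y = py g x y * h x y + g x y * py h x y"
  by (rule Dfr_py[OF Dfr_mul[OF s2_Dfr[OF assms(1)] s2_Dfr[OF assms(2)]]])

lemma Dfr_chain:
  assumes "Dfr g (u t) (v t) A B" "(u has_real_derivative du) (at t)" "(v has_real_derivative dv) (at t)"
  shows "((\<lambda>s. g (u s) (v s)) has_real_derivative (A*du + B*dv)) (at t)"
proof -
  have d: "((\<lambda>s. (u s, v s)) has_derivative (\<lambda>h. (du * h, dv * h))) (at t)"
    using assms(2,3) unfolding has_field_derivative_def by (rule has_derivative_Pair)
  from diff_chain_at[OF d assms(1)[unfolded Dfr_def]]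
  have "((\<lambda>s. g (u s) (v s)) has_derivative (\<lambda>h. A * (du*h) + B*(dv*h))) (at t)" by (simp add: o_def)
  then show ?thesis unfolding has_field_derivative_def
    by (rule has_derivative_eq_rhs) (simp add: fun_eq_iff algebra_simps)
qed

lemma deriv_zero_local:
  assumes "(f has_real_derivative D) (at x)" "open S" "x \<in> S" "\<forall>t\<in>S. f t = 0"
  shows "D = 0"
proof -
  have "((\<lambda>_. 0) has_real_derivative 0) (at x)" by simp
  hence "(f has_real_derivative 0) (at x)"
    by (rule has_field_derivative_transform_within_open[OF _ assms(2,3)]) (use assms(4) in auto)
  with assms(1) show ?thesis using DERIV_unique by blast
qed

lemma smooth1_D: "smooth1_on S g \<Longrightarrow> t \<in> S \<Longrightarrow> (g has_real_derivative deriv g t) (at t)"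
  by (erule smooth1_on.cases) auto
lemma smooth1_deriv: "smooth1_on S g \<Longrightarrow> smooth1_on S (deriv g)"
  by (erule smooth1_on.cases) auto


lemma curve_d:
  assumes "smooth2 F" "smooth2 G" "(gu has_real_derivative dgu) (at t)" "(gv has_real_derivative dgv) (at t)"
    "(ku has_real_derivative dku) (at t)" "(kv has_real_derivative dkv) (at t)"
  shows "((\<lambda>s. F (gu s) (gv s) * ku s + G (gu s) (gv s) * kv s) has_real_derivative
     ((px F (gu t) (gv t) * dgu + py F (gu t) (gv t) * dgv) * ku t + dku * F (gu t) (gv t) +
      ((px G (gu t) (gv t) * dgu + py G (gu t) (gv t) * dgv) * kv t + dkv * G (gu t) (gv t)))) (at t)"
proof -
  have A: "((\<lambda>s. F (gu s) (gv s)) has_real_derivative (px F (gu t) (gv t) * dgu + py F (gu t) (gv t) * dgv)) (at t)"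
    by (rule Dfr_chain[OF s2_Dfr[OF assms(1)] assms(3,4)])
  have B: "((\<lambda>s. G (gu s) (gv s)) has_real_derivative (px G (gu t) (gv t) * dgu + py G (gu t) (gv t) * dgv)) (at t)"
    by (rule Dfr_chain[OF s2_Dfr[OF assms(2)] assms(3,4)])
  show ?thesis using DERIV_add[OF DERIV_mult[OF A assms(5)] DERIV_mult[OF B assms(6)]] .
qed

lemma comp_d1:
  assumes "smooth2 f" "(\<phi> has_real_derivative d\<phi>) (at t)"
  shows "((\<lambda>s. f s (\<phi> s)) has_real_derivative (px f t (\<phi> t) * 1 + py f t (\<phi> t) * d\<phi>)) (at t)"
  using Dfr_chain[of f "\<lambda>s. s" t \<phi>, OF s2_Dfr[OF assms(1)] DERIV_ident assms(2)] by simp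

lemma comp_d2:
  assumes "smooth2 f" "open S" "0 \<in> S" "\<forall>t\<in>S. (\<phi> has_real_derivative deriv \<phi> t) (at t)"
    "(deriv \<phi> has_real_derivative \<phi>2) (at 0)"
  shows "((\<lambda>s. px f s (\<phi> s) * 1 + py f s (\<phi> s) * deriv \<phi> s) has_real_derivative
     ((px (px f) 0 (\<phi> 0) * 1 + py (px f) 0 (\<phi> 0) * deriv \<phi> 0) * 1 + 0 * px f 0 (\<phi> 0) +
      ((px (py f) 0 (\<phi> 0) * 1 + py (py f) 0 (\<phi> 0) * deriv \<phi> 0) * deriv \<phi> 0 + \<phi>2 * py f 0 (\<phi> 0)))) (at 0)"
  using curve_d[where gu="\<lambda>s. s" and ku="\<lambda>s. 1" and gv=\<phi> and kv="deriv \<phi>",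
     OF s2_px[OF assms(1)] s2_py[OF assms(1)] DERIV_ident assms(4)[rule_format, OF assms(3)] DERIV_const assms(5)]
  by simp

lemma v1lemma:
  assumes "smooth2 f" "open S" "0 \<in> S" "\<forall>t\<in>S. (\<phi> has_real_derivative deriv \<phi> t) (at t)"
    "(deriv \<phi> has_real_derivative \<phi>2) (at 0)"
  shows "deriv (deriv (\<lambda>t. f t (\<phi> t))) 0 =
     (px (px f) 0 (\<phi> 0) * 1 + py (px f) 0 (\<phi> 0) * deriv \<phi> 0) * 1 + 0 * px f 0 (\<phi> 0) +
      ((px (py f) 0 (\<phi> 0) * 1 + py (py f) 0 (\<phi> 0) * deriv \<phi> 0) * deriv \<phi> 0 + \<phi>2 * py f 0 (\<phi> 0))"
proof -
  have eq: "\<forall>t\<in>S. deriv (\<lambda>t. f t (\<phi> t)) t = px f t (\<phi> t) * 1 + py f t (\<phi> t) * deriv \<phi> t"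
    using comp_d1[OF assms(1)] assms(4) DERIV_imp_deriv by blast
  have "(deriv (\<lambda>t. f t (\<phi> t)) has_real_derivative
     ((px (px f) 0 (\<phi> 0) * 1 + py (px f) 0 (\<phi> 0) * deriv \<phi> 0) * 1 + 0 * px f 0 (\<phi> 0) +
      ((px (py f) 0 (\<phi> 0) * 1 + py (py f) 0 (\<phi> 0) * deriv \<phi> 0) * deriv \<phi> 0 + \<phi>2 * py f 0 (\<phi> 0)))) (at 0)"
    by (rule has_field_derivative_transform_within_open[OF comp_d2[OF assms] assms(2,3)]) (use eq in simp)
  then show ?thesis by (rule DERIV_imp_deriv)
qed

lemma final_alg:
  fixes x y dd K s :: real
  assumes "y \<noteq> 0" "x*y = -K" "dd = K * s" "s > 0" "K \<noteq> 0"
  shows "dd \<noteq> 0 \<and> (x,0) \<noteq> (0::real\<times>real) \<and> (y,0) \<noteq> (0::real\<times>real) \<and>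
     ((\<exists>c>0. (x,0) = c *\<^sub>R (y,0)) \<longleftrightarrow> dd < 0) \<and> ((\<exists>c<0. (x,0) = c *\<^sub>R (y,0)) \<longleftrightarrow> dd > 0)"
proof -
  have x0: "x \<noteq> 0" using assms(2,5) by auto
  have P: "(\<exists>c>0. (x,0) = c *\<^sub>R (y,0)) \<longleftrightarrow> x*y > 0"
  proof
    assume "\<exists>c>0. (x,0) = c *\<^sub>R (y,0)"
    then obtain c where c: "c > 0" "x = c*y" by auto
    have "x*y = c*(y*y)" using c by simp
    moreover have "y*y > 0" using assms(1) not_real_square_gt_zero by blast
    ultimately show "x*y > 0" using c(1) by (metis mult_pos_pos)
  next
    assume h: "x*y > 0"
    have "x/y > 0" using h by (simp add: zero_less_mult_iff zero_less_divide_iff)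
    moreover have "(x,0) = (x/y) *\<^sub>R (y,0)" using assms(1) by simp
    ultimately show "\<exists>c>0. (x,0) = c *\<^sub>R (y,0)" by blast
  qed
  have N: "(\<exists>c<0. (x,0) = c *\<^sub>R (y,0)) \<longleftrightarrow> x*y < 0"
  proof
    assume "\<exists>c<0. (x,0) = c *\<^sub>R (y,0)"
    then obtain c where c: "c < 0" "x = c*y" by auto
    have "x*y = c*(y*y)" using c by simp
    moreover have "y*y > 0" using assms(1) not_real_square_gt_zero by blast
    ultimately show "x*y < 0" using c(1) by (metis mult_neg_pos)
  next
    assume h: "x*y < 0"
    have "x/y < 0" using h by (simp add: mult_less_0_iff divide_less_0_iff)
    moreover have "(x,0) = (x/y) *\<^sub>R (y,0)" using assms(1) by simp
    ultimately show "\<exists>c<0. (x,0) = c *\<^sub>R (y,0)" by blast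
  qed
  have "dd < 0 \<longleftrightarrow> K < 0" using assms(3,4) by (simp add: mult_less_0_iff)
  moreover have "dd > 0 \<longleftrightarrow> K > 0" using assms(3,4) by (simp add: zero_less_mult_iff)
  ultimately show ?thesis using P N x0 assms by (auto simp: zero_prod_def)
qed

theorem mainTheorem14:
  fixes f1 f2 :: "real \<Rightarrow> real \<Rightarrow> real" and \<phi> :: "real \<Rightarrow> real" and e :: real
  assumes "smooth2 f1" and "smooth2 f2"
    and "one_generic f1 f2"
    and "cusp_point f1 f2 0 0"
    and "f1 0 0 = 0" and "f2 0 0 = 0"
    and "px f1 0 0 = 0" and "px f2 0 0 = 0" and "py f2 0 0 = 0"
    and "py f1 0 0 \<noteq> 0"
    and "px (jac f1 f2) 0 0 = 0" and "py (jac f1 f2) 0 0 \<noteq> 0"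
    and "e > 0" and "smooth1_on (ball 0 e) \<phi>" and "\<phi> 0 = 0"
    and "\<forall>t\<in>ball 0 e. jac f1 f2 t (\<phi> t) = 0"
  shows "detDF f1 f2 0 0 \<noteq> 0 \<and>
    (let v1 = (deriv (deriv (\<lambda>t. f1 t (\<phi> t))) 0, deriv (deriv (\<lambda>t. f2 t (\<phi> t))) 0);
         v2 = (px f1 0 0 * px (jac f1 f2) 0 0 + py f1 0 0 * py (jac f1 f2) 0 0,
               px f2 0 0 * px (jac f1 f2) 0 0 + py f2 0 0 * py (jac f1 f2) 0 0)
     in v1 \<noteq> 0 \<and> v2 \<noteq> 0 \<and>
        ((\<exists>c>0. v1 = c *\<^sub>R v2) \<longleftrightarrow> detDF f1 f2 0 0 < 0) \<and>
        ((\<exists>c<0. v1 = c *\<^sub>R v2) \<longleftrightarrow> detDF f1 f2 0 0 > 0))"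
proof -
  note s1 = assms(1) and s2 = assms(2)
  have Jeq: "jac f1 f2 = (\<lambda>x y. px f1 x y * py f2 x y - py f1 x y * px f2 x y)"
    by (simp add: fun_eq_iff jac_def)
  have sJ: "smooth2 (jac f1 f2)" unfolding Jeq by (intro s2_diff s2_mul s2_px s2_py s1 s2)
  have Jx: "px (jac f1 f2) 0 0 = - py f1 0 0 * px (px f2) 0 0"
    unfolding Jeq using assms(7,8,9) by (simp add: px_diff px_mul s2_mul s2_px s2_py s1 s2)
  have Jy: "py (jac f1 f2) 0 0 = - py f1 0 0 * py (px f2) 0 0"
    unfolding Jeq using assms(7,8,9) by (simp add: py_diff py_mul s2_mul s2_px s2_py s1 s2)
  define a where "a = py f1 0 0"
  define b where "b = py (jac f1 f2) 0 0"
  define r where "r = py (px f2) 0 0"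
  define Jxx where "Jxx = px (px (jac f1 f2)) 0 0"
  define p11 where "p11 = px (px f1) 0 0"
  have ha: "a \<noteq> 0" using assms(10) a_def by simp
  have hb: "b \<noteq> 0" using assms(12) b_def by simp
  have q11: "px (px f2) 0 0 = 0" using Jx assms(11) ha a_def by simp
  have hbr: "b = - a * r" using Jy a_def b_def r_def by simp
  have hr: "r \<noteq> 0" using hbr hb by auto
  have hS: "open (ball 0 e)" "0 \<in> ball (0::real) e" using assms(13) by auto
  have h\<phi>: "\<forall>t\<in>ball 0 e. (\<phi> has_real_derivative deriv \<phi> t) (at t)"
    using smooth1_D[OF assms(14)] by blast
  have h\<phi>2: "(deriv \<phi> has_real_derivative deriv (deriv \<phi>) 0) (at 0)"
    using smooth1_D[OF smooth1_deriv[OF assms(14)] hS(2)] .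
  have E1: "\<forall>t\<in>ball 0 e. px (jac f1 f2) t (\<phi> t) * 1 + py (jac f1 f2) t (\<phi> t) * deriv \<phi> t = 0"
  proof
    fix t :: real assume t: "t \<in> ball 0 e"
    show "px (jac f1 f2) t (\<phi> t) * 1 + py (jac f1 f2) t (\<phi> t) * deriv \<phi> t = 0"
      using deriv_zero_local[OF comp_d1[OF sJ h\<phi>[rule_format, OF t]] hS(1) t] assms(16) by simp
  qed
  have d\<phi>0: "deriv \<phi> 0 = 0"
    using E1[rule_format, OF hS(2)] assms(15) assms(11) hb b_def by simp
  have "(px (px (jac f1 f2)) 0 (\<phi> 0) * 1 + py (px (jac f1 f2)) 0 (\<phi> 0) * deriv \<phi> 0) * 1 + 0 * px (jac f1 f2) 0 (\<phi> 0) +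
      ((px (py (jac f1 f2)) 0 (\<phi> 0) * 1 + py (py (jac f1 f2)) 0 (\<phi> 0) * deriv \<phi> 0) * deriv \<phi> 0 + deriv (deriv \<phi>) 0 * py (jac f1 f2) 0 (\<phi> 0)) = 0"
    by (rule deriv_zero_local[OF comp_d2[OF sJ hS h\<phi> h\<phi>2] hS(1) hS(2)]) (use E1 in simp)
  then have phi2: "Jxx + b * deriv (deriv \<phi>) 0 = 0"
    using d\<phi>0 assms(15) by (simp add: Jxx_def b_def algebra_simps)
  have v11: "deriv (deriv (\<lambda>t. f1 t (\<phi> t))) 0 = p11 + a * deriv (deriv \<phi>) 0"
    using v1lemma[OF s1 hS h\<phi> h\<phi>2] d\<phi>0 assms(15) by (simp add: p11_def a_def algebra_simps)
  have v12: "deriv (deriv (\<lambda>t. f2 t (\<phi> t))) 0 = 0"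
    using v1lemma[OF s2 hS h\<phi> h\<phi>2] d\<phi>0 assms(15) q11 assms(9) by simp
  obtain e' g1 g2 k1 k2 where ce: "e' > 0" and cs: "smooth1_on (ball 0 e') g1" "smooth1_on (ball 0 e') g2"
      "smooth1_on (ball 0 e') k1" "smooth1_on (ball 0 e') k2"
    and g0: "g1 0 = 0" "g2 0 = 0" and gd: "(deriv g1 0, deriv g2 0) \<noteq> (0, 0)"
    and tan1: "px f1 0 0 * deriv g1 0 + py f1 0 0 * deriv g2 0 = 0"
    and kk: "\<forall>t\<in>ball 0 e'. (k1 t, k2 t) \<noteq> (0, 0) \<and>
           px f1 (g1 t) (g2 t) * k1 t + py f1 (g1 t) (g2 t) * k2 t = 0 \<and>
           px f2 (g1 t) (g2 t) * k1 t + py f2 (g1 t) (g2 t) * k2 t = 0"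
    and hd: "deriv (\<lambda>t. px (jac f1 f2) (g1 t) (g2 t) * k1 t + py (jac f1 f2) (g1 t) (g2 t) * k2 t) 0 \<noteq> 0"
    using assms(4) unfolding cusp_point_def Let_def by blast
  have hS': "open (ball 0 e')" "0 \<in> ball (0::real) e'" using ce by auto
  note dg1 = smooth1_D[OF cs(1) hS'(2)] and dg2 = smooth1_D[OF cs(2) hS'(2)]
    and dk1 = smooth1_D[OF cs(3) hS'(2)] and dk2 = smooth1_D[OF cs(4) hS'(2)]
  have g2d: "deriv g2 0 = 0" using tan1 assms(7,10) by simp
  have g1d: "deriv g1 0 \<noteq> 0" using gd g2d by simp
  have k20: "k2 0 = 0" using kk[rule_format, OF hS'(2)] g0 assms(7,10) by simp
  have k10: "k1 0 \<noteq> 0" using kk[rule_format, OF hS'(2)] k20 by simp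
  have X: "(px (px f1) (g1 0) (g2 0) * deriv g1 0 + py (px f1) (g1 0) (g2 0) * deriv g2 0) * k1 0 + deriv k1 0 * px f1 (g1 0) (g2 0) +
      ((px (py f1) (g1 0) (g2 0) * deriv g1 0 + py (py f1) (g1 0) (g2 0) * deriv g2 0) * k2 0 + deriv k2 0 * py f1 (g1 0) (g2 0)) = 0"
    by (rule deriv_zero_local[OF curve_d[OF s2_px[OF s1] s2_py[OF s1] dg1 dg2 dk1 dk2] hS'(1) hS'(2)])
       (use kk in simp)
  then have X': "p11 * deriv g1 0 * k1 0 + a * deriv k2 0 = 0"
    using g0 g2d k20 assms(7) by (simp add: p11_def a_def mult.commute)
  have "deriv (\<lambda>t. px (jac f1 f2) (g1 t) (g2 t) * k1 t + py (jac f1 f2) (g1 t) (g2 t) * k2 t) 0 =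
     (px (px (jac f1 f2)) (g1 0) (g2 0) * deriv g1 0 + py (px (jac f1 f2)) (g1 0) (g2 0) * deriv g2 0) * k1 0 + deriv k1 0 * px (jac f1 f2) (g1 0) (g2 0) +
      ((px (py (jac f1 f2)) (g1 0) (g2 0) * deriv g1 0 + py (py (jac f1 f2)) (g1 0) (g2 0) * deriv g2 0) * k2 0 + deriv k2 0 * py (jac f1 f2) (g1 0) (g2 0))"
    by (rule DERIV_imp_deriv[OF curve_d[OF s2_px[OF sJ] s2_py[OF sJ] dg1 dg2 dk1 dk2]])
  then have Y: "Jxx * deriv g1 0 * k1 0 + b * deriv k2 0 \<noteq> 0"
    using hd g0 g2d k20 assms(11) by (simp add: Jxx_def b_def mult.commute)
  have aY: "a * (Jxx * deriv g1 0 * k1 0 + b * deriv k2 0) = (a * Jxx - b * p11) * (deriv g1 0 * k1 0)"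
  proof -
    have ak: "a * deriv k2 0 = - (p11 * deriv g1 0 * k1 0)" using X' by linarith
    have "a * (Jxx * deriv g1 0 * k1 0 + b * deriv k2 0) = a * Jxx * deriv g1 0 * k1 0 + b * (a * deriv k2 0)"
      by (simp add: algebra_simps)
    also have "\<dots> = a * Jxx * deriv g1 0 * k1 0 - b * (p11 * deriv g1 0 * k1 0)" using ak by simp
    also have "\<dots> = (a * Jxx - b * p11) * (deriv g1 0 * k1 0)" by (simp add: algebra_simps)
    finally show ?thesis .
  qed
  have hD: "a * Jxx - b * p11 \<noteq> 0" using aY Y ha by auto
  have F1eq: "bigF1 f1 f2 = (\<lambda>x y. px f1 x y * (- py (jac f1 f2) x y) + py f1 x y * px (jac f1 f2) x y)"
    by (simp add: fun_eq_iff bigF1_def)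
  have F2eq: "bigF2 f1 f2 = (\<lambda>x y. px f2 x y * (- py (jac f1 f2) x y) + py f2 x y * px (jac f1 f2) x y)"
    by (simp add: fun_eq_iff bigF2_def)
  have F1x: "px (bigF1 f1 f2) 0 0 = a * Jxx - b * p11"
    unfolding F1eq using assms(7) assms(11)
    by (simp only: px_add px_mul px_neg s2_mul s2_neg s2_px s2_py s1 sJ) (simp add:  a_def b_def Jxx_def p11_def)
  have F2x: "px (bigF2 f1 f2) 0 0 = 0"
    unfolding F2eq using assms(8,9) assms(11) q11
    by (simp only: px_add px_mul px_neg s2_mul s2_neg s2_px s2_py s2 sJ)
  have F2y: "py (bigF2 f1 f2) 0 0 = - r * b"
    unfolding F2eq using assms(8,9) assms(11)
    by (simp only: py_add py_mul py_neg s2_mul s2_neg s2_px s2_py s2 sJ) (simp add:  r_def b_def)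
  have det: "detDF f1 f2 0 0 = ((a * Jxx - b * p11) * a) * (r * r)"
    unfolding detDF_def F1x F2x F2y hbr by (simp add: algebra_simps)
  have v2: "(px f1 0 0 * px (jac f1 f2) 0 0 + py f1 0 0 * py (jac f1 f2) 0 0,
               px f2 0 0 * px (jac f1 f2) 0 0 + py f2 0 0 * py (jac f1 f2) 0 0) = (a * b, 0)"
    using assms(7,8,9,11) by (simp add: a_def b_def)
  have xy: "(p11 + a * deriv (deriv \<phi>) 0) * (a * b) = - ((a * Jxx - b * p11) * a)"
  proof -
    have "b * deriv (deriv \<phi>) 0 = - Jxx" using phi2 by simp
    have "(p11 + a * deriv (deriv \<phi>) 0) * (a * b) = p11 * a * b + a * a * (b * deriv (deriv \<phi>) 0)"
      by (simp add: algebra_simps)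
    also have "\<dots> = p11 * a * b - a * a * Jxx" using \<open>b * deriv (deriv \<phi>) 0 = - Jxx\<close> by simp
    also have "\<dots> = - ((a * Jxx - b * p11) * a)" by (simp add: algebra_simps)
    finally show ?thesis .
  qed
  have rr: "r * r > 0" using hr not_real_square_gt_zero by blast
  have fin: "detDF f1 f2 0 0 \<noteq> 0 \<and> (p11 + a * deriv (deriv \<phi>) 0, 0) \<noteq> (0::real\<times>real) \<and> (a * b, 0) \<noteq> (0::real\<times>real) \<and>
     ((\<exists>c>0. (p11 + a * deriv (deriv \<phi>) 0, 0) = c *\<^sub>R (a * b, 0)) \<longleftrightarrow> detDF f1 f2 0 0 < 0) \<and>
     ((\<exists>c<0. (p11 + a * deriv (deriv \<phi>) 0, 0) = c *\<^sub>R (a * b, 0)) \<longleftrightarrow> detDF f1 f2 0 0 > 0)"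
    by (rule final_alg[OF _ xy det]) (use ha hb hD rr in auto)
  show ?thesis unfolding Let_def v2 v11 v12 using fin by simp
qed

end
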